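(* Let $\mu$ be the distribution constructed below. Then $\mu\in\mathcal{L}_{loc}$, i.e. for every $c>0$ and every $a\in\mathbb{R}$, $\mu((x,x+c])>0$ for all large $x$ and $\mu((x+a,x+a+c])\sim\mu((x,x+c])$.
   Context: $f(x)\sim g(x)$ means $\lim_{x\to\infty}f(x)/g(x)=1$. The class $\mathcal{L}_{loc}$ consists of distributions $\rho$ on $\mathbb{R}$ such that for every $c>0$, $\rho((x,x+c])>0$ for all sufficiently large $x$ and $\rho((x+a,x+a+c])\sim\rho((x,x+c])$ for every $a\in\mathbb{R}$. Construction: fix $1<x_0<b$ and $\delta\in(0,1)$ with $\delta<\min(x_0-1,\,b-x_0)$. Let $h$ be a continuous periodic function on $\mathbb{R}$ with period $\log b$ such that $h(\log x)>0$ for $x\in[1,x_0)\cup(x_0,b]$, $h(\log x_0)=0$, and $h(\log x)=-1/\log|x-x_0|$ for $0<|x-x_0|<\delta$. For $\alpha>0$ let $\phi(x):=x^{-\alpha-1}h(\log x)\mathbf{1}_{[1,\infty)}(x)$, $M:=\int_1^\infty x^{-1-\alpha}h(\log x)\,dx$, and $\mu(dx):=M^{-1}\phi(x)\,dx$. *)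

theory Defs
  imports "HOL-Probability.Probability"
begin

definition L_loc :: "real measure \<Rightarrow> bool" where
  "L_loc \<rho> \<longleftrightarrow> prob_space \<rho> \<and> sets \<rho> = sets borel \<and>
     (\<forall>c>0. (\<forall>\<^sub>F x in at_top. measure \<rho> {x<..x+c} > 0) \<and>
        (\<forall>a. ((\<lambda>x. measure \<rho> {x+a<..x+a+c} / measure \<rho> {x<..x+c}) \<longlongrightarrow> 1) at_top))"

definition phi_fun :: "(real \<Rightarrow> real) \<Rightarrow> real \<Rightarrow> real \<Rightarrow> real" where
  "phi_fun h \<alpha> x = indicator {1..} x * x powr (-\<alpha>-1) * h (ln x)"

definition M_const :: "(real \<Rightarrow> real) \<Rightarrow> real \<Rightarrow> real" where
  "M_const h \<alpha> = (LBINT x:{1..}. x powr (-1-\<alpha>) * h (ln x))"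

definition mu_meas :: "(real \<Rightarrow> real) \<Rightarrow> real \<Rightarrow> real measure" where
  "mu_meas h \<alpha> = density lborel (\<lambda>x. ennreal (phi_fun h \<alpha> x / M_const h \<alpha>))"

end

theory Submission
  imports Defs
begin


lemma log_rel:
  fixes r r' \<delta> e q :: real
  assumes "0<r" "0<r'" "r<\<delta>" "r'<\<delta>" "\<delta><1" "\<bar>r'-r\<bar> \<le> q*r" "q \<le> 1/2" "2*q \<le> e*(-ln \<delta>)" "0 \<le> q"
  shows "\<bar>(-1/ln r') - (-1/ln r)\<bar> \<le> e*(-1/ln r)"
proof -
  have L: "ln r < 0" "ln r' < 0" using assms by auto
  have ld: "ln \<delta> < 0" "ln r' < ln \<delta>" using assms by auto
  have e0: "0 \<le> e"
  proof -
    have "0 \<le> e*(-ln \<delta>)" using assms by linarith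
    show ?thesis
    proof (rule ccontr)
      assume "\<not> 0 \<le> e"
      then have "0 < e * ln \<delta>" using ld by (simp add: mult_neg_neg)
      then show False using \<open>0 \<le> e*(-ln \<delta>)\<close> by simp
    qed
  qed
  have r'lo: "r' \<ge> r/2"
  proof -
    have "q*r \<le> (1/2)*r" using assms by (intro mult_right_mono) auto
    then show ?thesis using assms by linarith
  qed
  have a1: "ln r' - ln r \<le> q"
  proof -
    have "ln (r'/r) \<le> r'/r - 1" using assms by (intro ln_le_minus_one) auto
    also have "\<dots> \<le> q" using assms by (simp add: field_simps abs_le_iff)
    finally show ?thesis using assms by (simp add: ln_div)
  qed
  have a2: "ln r - ln r' \<le> 2*q"
  proof -
    have "ln (r/r') \<le> r/r' - 1" using assms by (intro ln_le_minus_one) auto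
    also have "\<dots> = (r - r')/r'" using assms by (simp add: field_simps)
    also have "\<dots> \<le> (q*r)/r'" using assms by (intro divide_right_mono) auto
    also have "\<dots> \<le> (q*r)/(r/2)" using assms r'lo by (intro divide_left_mono) auto
    also have "\<dots> = 2*q" using assms by simp
    finally show ?thesis using assms by (simp add: ln_div)
  qed
  have d: "\<bar>ln r' - ln r\<bar> \<le> e * (- ln r')"
  proof -
    have "\<bar>ln r' - ln r\<bar> \<le> 2*q" using a1 a2 assms by linarith
    also have "\<dots> \<le> e*(-ln \<delta>)" by fact
    also have "\<dots> \<le> e*(-ln r')" using e0 ld by (intro mult_left_mono) auto
    finally show ?thesis .
  qed
  have eq: "(-1/ln r') - (-1/ln r) = (ln r' - ln r)/(ln r * ln r')" using L by (simp add: field_simps)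
  have pos: "ln r * ln r' > 0" using L by (simp add: mult_neg_neg)
  have "\<bar>(ln r' - ln r)/(ln r * ln r')\<bar> = \<bar>ln r' - ln r\<bar>/(ln r * ln r')" using pos by simp
  also have "\<dots> \<le> e * (- ln r')/(ln r * ln r')" using pos d by (intro divide_right_mono) auto
  also have "\<dots> = e*(-1/ln r)" using L by (simp add: field_simps)
  finally show ?thesis using eq by simp
qed

lemma case1_bounds:
  fixes K s S e \<rho> :: real
  assumes "K>0" "0<\<bar>s\<bar>" "\<bar>s\<bar> \<le> S" "1 \<le> S" "(1+e)*ln S \<le> e*K" "0<\<rho>" "\<rho>\<le>1"
    "-(1-e)*ln \<rho> \<le> e*K" "0<e" "e \<le> 1/2"
  shows "0 \<le> -1/(ln \<bar>s\<bar> - K) \<and> -1/(ln \<bar>s\<bar> - K) \<le> (1+e)*(1/K) \<and>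
         (\<rho> \<le> \<bar>s\<bar> \<longrightarrow> (1-e)*(1/K) \<le> -1/(ln \<bar>s\<bar> - K))"
proof -
  have lS: "0 \<le> ln S" using assms by simp
  have lsS: "ln \<bar>s\<bar> \<le> ln S" using assms by simp
  have KS: "ln S < K"
  proof -
    have "0 \<le> e*ln S" using assms lS by simp
    then have "ln S \<le> (1+e)*ln S" by (simp add: algebra_simps)
    also have "\<dots> \<le> e*K" by fact
    also have "\<dots> < 1*K" using assms by (intro mult_strict_right_mono) auto
    finally show ?thesis by simp
  qed
  have D: "K - ln \<bar>s\<bar> > 0" using KS lsS by linarith
  have eqv: "-1/(ln \<bar>s\<bar> - K) = 1/(K - ln \<bar>s\<bar>)"
  proof -
    have "ln \<bar>s\<bar> - K = -(K - ln \<bar>s\<bar>)" by simp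
    then show ?thesis by (simp only: divide_minus_right)
  qed
  have up: "1/(K - ln \<bar>s\<bar>) \<le> (1+e)*(1/K)"
  proof (cases "\<bar>s\<bar> \<le> 1")
    case True
    then have "ln \<bar>s\<bar> \<le> 0" using assms by simp
    then have "1/(K - ln \<bar>s\<bar>) \<le> 1/K" using assms D by (intro divide_left_mono) auto
    also have "\<dots> \<le> (1+e)*(1/K)" using mult_right_mono[of 1 "1+e" "1/K"] assms by simp
    finally show ?thesis .
  next
    case False
    have "(1+e)*ln \<bar>s\<bar> \<le> (1+e)*ln S" using assms lsS by (intro mult_left_mono) auto
    then have "K \<le> (1+e)*(K - ln \<bar>s\<bar>)" using assms by (simp add: algebra_simps)
    then show ?thesis using D assms by (simp add: field_simps)
  qed
  have lo: "\<rho> \<le> \<bar>s\<bar> \<longrightarrow> (1-e)*(1/K) \<le> 1/(K - ln \<bar>s\<bar>)"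
  proof
    assume "\<rho> \<le> \<bar>s\<bar>"
    then have "ln \<rho> \<le> ln \<bar>s\<bar>" using assms by simp
    then have "(1-e)*ln \<rho> \<le> (1-e)*ln \<bar>s\<bar>" using assms by (intro mult_left_mono) auto
    then have "(1-e)*(K - ln \<bar>s\<bar>) \<le> K" using assms by (simp add: algebra_simps)
    then show "(1-e)*(1/K) \<le> 1/(K - ln \<bar>s\<bar>)" using D assms by (simp add: field_simps)
  qed
  show ?thesis using eqv up lo D by simp
qed



lemma per_int:
  fixes h :: "real \<Rightarrow> real"
  assumes "\<forall>t. h (t + ln b) = h t"
  shows "h (t + real_of_int k * ln b) = h t"
proof -
  have nat: "h (t + real n * ln b) = h t" for t n
  proof (induction n arbitrary: t)
    case 0 then show ?case by simp
  next
    case (Suc n)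
    have "h (t + real (Suc n) * ln b) = h ((t + real n * ln b) + ln b)" by (simp add: algebra_simps)
    also have "\<dots> = h (t + real n * ln b)" using assms by simp
    finally show ?case using Suc by simp
  qed
  show ?thesis
  proof (cases "k \<ge> 0")
    case True
    then obtain n where "k = int n" by (metis nonneg_int_cases)
    then show ?thesis using nat by simp
  next
    case False
    define n where "n = nat (-k)"
    have k: "k = - int n" unfolding n_def using False by simp
    have "h ((t - real n * ln b) + real n * ln b) = h (t - real n * ln b)" by (rule nat)
    then show ?thesis using k by simp
  qed
qed

lemma int_indicator_le:
  fixes u v z \<rho> :: real
  assumes "0 \<le> \<rho>"
  shows "(LINT y:{u<..v}|lborel. indicator {z-\<rho><..<z+\<rho>} y) \<le> 2*\<rho>"
    and "set_integrable lborel {u<..v} (indicator {z-\<rho><..<z+\<rho>} :: real \<Rightarrow> real)"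
proof -
  have eq: "(\<lambda>y. indicator {u<..v} y *\<^sub>R (indicator {z-\<rho><..<z+\<rho>} y :: real))
      = indicator ({u<..v} \<inter> {z-\<rho><..<z+\<rho>})"
    by (auto simp: indicator_def)
  have fm: "{z-\<rho><..<z+\<rho>} \<in> fmeasurable lborel"
    using assms by (intro fmeasurableI) auto
  have "measure lborel ({u<..v} \<inter> {z-\<rho><..<z+\<rho>}) \<le> measure lborel {z-\<rho><..<z+\<rho>}"
    by (rule measure_mono_fmeasurable[OF _ _ fm]) auto
  also have "\<dots> = 2*\<rho>" using assms by simp
  finally show "(LINT y:{u<..v}|lborel. indicator {z-\<rho><..<z+\<rho>} y) \<le> 2*\<rho>"
    unfolding set_lebesgue_integral_def eq by simp
  show "set_integrable lborel {u<..v} (indicator {z-\<rho><..<z+\<rho>} :: real \<Rightarrow> real)"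
  proof -
    have "{z-\<rho><..<z+\<rho>} \<inter> {u<..v} \<in> fmeasurable lborel"
      by (rule fmeasurable_Int_fmeasurable[OF fm]) auto
    then have "emeasure lborel ({u<..v} \<inter> {z-\<rho><..<z+\<rho>}) < \<infinity>"
      by (simp add: fmeasurable_def Int_commute)
    then show ?thesis unfolding set_integrable_def eq
      by (simp add: integrable_indicator_iff)
  qed
qed

lemma window_int:
  fixes F :: "real \<Rightarrow> real" and u v w e \<rho> z :: real
  assumes cont: "continuous_on {u..v} F" and uv: "u \<le> v" and w: "0 \<le> w" and e: "0 \<le> e" "e \<le> 1"
    and rho: "0 \<le> \<rho>"
    and b: "\<forall>y\<in>{u..v}. 0 \<le> F y \<and> F y \<le> (1+e)*w \<and> (\<rho> \<le> \<bar>y - z\<bar> \<longrightarrow> (1-e)*w \<le> F y)"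
  shows "\<bar>(LINT y:{u<..v}|lborel. F y) - (v-u)*w\<bar> \<le> (e*(v-u) + 2*\<rho>)*w"
proof -
  define A where "A = {u<..v}"
  define B where "B = {z-\<rho><..<z+\<rho>}"
  have sub: "A \<subseteq> {u..v}" unfolding A_def by auto
  have iF: "set_integrable lborel A F"
    by (rule set_integrable_subset[OF borel_integrable_atLeastAtMost'[OF cont]]) (use sub A_def in auto)
  have iC: "set_integrable lborel A (\<lambda>_. c)" for c :: real
    by (rule set_integrable_subset[OF borel_integrable_atLeastAtMost'[OF continuous_on_const]])
       (use sub A_def in auto)
  have mA: "measure lborel A = v - u" unfolding A_def using uv by simp
  have cA: "(LINT y:A|lborel. c) = c*(v-u)" for c :: real
    using mA uv unfolding A_def by (subst set_integral_const) auto
  have iB: "set_integrable lborel A (indicator B :: real \<Rightarrow> real)" and IB: "(LINT y:A|lborel. indicator B y) \<le> 2*\<rho>"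
    using int_indicator_le[OF rho, of u v z] unfolding A_def B_def by auto
  have up: "(LINT y:A|lborel. F y) \<le> (LINT y:A|lborel. (1+e)*w)"
    by (rule set_integral_mono[OF iF iC]) (use b sub in auto)
  define c0 where "c0 = (1-e)*w"
  have c0: "0 \<le> c0" unfolding c0_def using e w by simp
  have iG: "set_integrable lborel A (\<lambda>y. c0 - c0 * indicator B y)"
  proof -
    have "set_integrable lborel A (\<lambda>y. c0 * indicator B y)"
      by (rule set_integrable_mult_right) (rule iB)
    then show ?thesis by (rule set_integral_diff(1)[OF iC])
  qed
  have lo: "(LINT y:A|lborel. c0 - c0 * indicator B y) \<le> (LINT y:A|lborel. F y)"
  proof (rule set_integral_mono[OF iG iF])
    fix y assume y: "y \<in> A"
    show "c0 - c0 * indicator B y \<le> F y"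
    proof (cases "y \<in> B")
      case True then show ?thesis using b sub y by auto
    next
      case False
      then have "\<rho> \<le> \<bar>y - z\<bar>" unfolding B_def by auto
      then show ?thesis using b sub y False c0_def by auto
    qed
  qed
  have "(LINT y:A|lborel. c0 - c0 * indicator B y) = c0*(v-u) - c0 * (LINT y:A|lborel. indicator B y)"
    using iC iB by (subst set_integral_diff(2)) (auto simp: cA)
  also have "\<dots> \<ge> c0*(v-u) - c0*(2*\<rho>)" using IB c0 by (simp add: mult_left_mono)
  finally have lo2: "c0*(v-u) - c0*(2*\<rho>) \<le> (LINT y:A|lborel. F y)" using lo by linarith
  have up2: "(LINT y:A|lborel. F y) \<le> (1+e)*w*(v-u)"
    using up cA[of "(1+e)*w"] by linarith
  have "c0*(2*\<rho>) \<le> w*(2*\<rho>)" unfolding c0_def using e w rho mult_right_mono[of "1-e" 1 w] by (intro mult_right_mono) auto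
  then have "(v-u)*w - (e*(v-u) + 2*\<rho>)*w \<le> (LINT y:A|lborel. F y)"
    using lo2 unfolding c0_def by (simp add: algebra_simps)
  moreover have "(LINT y:A|lborel. F y) \<le> (v-u)*w + (e*(v-u) + 2*\<rho>)*w"
  proof -
    have "0 \<le> 2*\<rho>*w" using w rho by simp
    then show ?thesis using up2 by (simp add: algebra_simps)
  qed
  ultimately show ?thesis unfolding A_def by (simp add: abs_le_iff algebra_simps)
qed



lemma pos_K0:
  fixes x0 b :: real and h :: "real \<Rightarrow> real"
  assumes "1 < x0" "x0 < b"
    and per: "\<forall>t. h (t + ln b) = h t"
    and pos: "\<forall>x\<in>{1..<x0} \<union> {x0<..b}. h (ln x) > 0"
    and v: "x0 * exp (-(3/4)*ln b) \<le> v" "v \<le> x0 * exp ((3/4)*ln b)" "v \<noteq> x0"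
  shows "h (ln v) > 0"
proof -
  have b1: "1 < b" using assms by simp
  have lb: "0 < ln b" using b1 by simp
  have vpos: "0 < v"
  proof -
    have "0 < x0 * exp (-(3/4)*ln b)" using assms by simp
    then show ?thesis using v(1) by linarith
  qed
  have lv1: "ln x0 - (3/4)*ln b \<le> ln v"
  proof -
    have "ln (x0 * exp (-(3/4)*ln b)) \<le> ln v" using v(1) vpos assms by (subst ln_le_cancel_iff) auto
    then show ?thesis using assms by (simp add: ln_mult)
  qed
  have lv2: "ln v \<le> ln x0 + (3/4)*ln b"
  proof -
    have "ln v \<le> ln (x0 * exp ((3/4)*ln b))" using v(2) vpos assms by (subst ln_le_cancel_iff) auto
    then show ?thesis using assms by (simp add: ln_mult)
  qed
  have lx0: "0 < ln x0" "ln x0 < ln b" using assms by auto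
  show ?thesis
  proof (cases "v < 1")
    case True
    define y where "y = v * b"
    have ly: "ln y = ln v + ln b" unfolding y_def using vpos b1 by (simp add: ln_mult)
    have "ln x0 < ln y" using ly lv1 lb by linarith
    then have "x0 < y" using assms vpos b1 unfolding y_def by simp
    moreover have "y \<le> b" unfolding y_def using True b1 vpos by simp
    ultimately have "h (ln y) > 0" using pos by auto
    then show ?thesis using per ly by metis
  next
    case False
    show ?thesis
    proof (cases "v \<le> b")
      case True
      then show ?thesis using pos False v(3) by auto
    next
      case False2: False
      define y where "y = v / b"
      have ly: "ln v = ln y + ln b" unfolding y_def using vpos b1 by (simp add: ln_div)
      have "ln y < ln x0" using ly lv2 lb by linarith
      then have "y < x0" using assms vpos b1 unfolding y_def by simp
      moreover have "1 \<le> y" unfolding y_def using False2 b1 by simp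
      ultimately have "h (ln y) > 0" using pos by auto
      then show ?thesis using per ly by metis
    qed
  qed
qed



lemma expbound:
  fixes A B K :: real
  assumes "0 < A" "0 < B" "ln (A/B) < K"
  shows "A / exp K < B"
proof -
  have "A/B < exp K" using assms by (metis exp_less_cancel_iff exp_ln divide_pos_pos)
  then show ?thesis using assms by (simp add: field_simps)
qed

lemma keyP:
  fixes x0 b \<delta> R \<epsilon> :: real and h :: "real \<Rightarrow> real"
  assumes x0: "1 < x0" "x0 < b"
    and \<delta>: "0 < \<delta>" "\<delta> < 1" "\<delta> < min (x0 - 1) (b - x0)"
    and hc: "continuous_on UNIV h"
    and per: "\<forall>t. h (t + ln b) = h t"
    and pos: "\<forall>x\<in>{1..<x0} \<union> {x0<..b}. h (ln x) > 0"
    and h0: "h (ln x0) = 0"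
    and near: "\<forall>x. 0 < \<bar>x - x0\<bar> \<and> \<bar>x - x0\<bar> < \<delta> \<longrightarrow> h (ln x) = - 1 / ln \<bar>x - x0\<bar>"
    and R: "0 < R" and \<epsilon>: "0 < \<epsilon>"
  shows "\<forall>\<^sub>F x in at_top. \<exists>w>0. \<forall>u v. x - R \<le> u \<longrightarrow> u \<le> v \<longrightarrow> v \<le> x + R \<longrightarrow>
            \<bar>(LINT y:{u<..v}|lborel. h (ln y)) - (v-u)*w\<bar> \<le> \<epsilon>*w"
proof -
  define \<beta> where "\<beta> = ln b"
  have \<beta>: "0 < \<beta>" using x0 unfolding \<beta>_def by simp
  define f where "f v = h (ln v)" for v
  define Kl where "Kl = x0 * exp (-(3/4)*\<beta>)"
  define Kh where "Kh = x0 * exp ((3/4)*\<beta>)"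
  define Cl where "Cl = x0 * exp (-(1/2)*\<beta>)"
  define Ch where "Ch = x0 * exp ((1/2)*\<beta>)"
  have KC: "0 < Kl" "Kl < Cl" "Cl < x0" "x0 < Ch" "Ch < Kh"
    using x0 \<beta> by (auto simp: Kl_def Cl_def Ch_def Kh_def)
  define \<eta> where "\<eta> = \<delta>/2"
  have \<eta>: "0 < \<eta>" unfolding \<eta>_def using \<delta> by simp
  have fc: "continuous_on {Kl..Kh} f"
    unfolding f_def using KC by (intro continuous_on_compose2[OF hc] continuous_intros) auto
  define S\<eta> where "S\<eta> = {Kl..Kh} \<inter> {v. \<eta>/2 \<le> \<bar>v - x0\<bar>}"
  obtain m where m: "0 < m" "\<forall>v\<in>S\<eta>. m \<le> f v"
  proof (cases "S\<eta> = {}")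
    case True then show ?thesis using that[of 1] by auto
  next
    case False
    have "compact S\<eta>" unfolding S\<eta>_def
      by (intro compact_Int_closed compact_Icc closed_Collect_le continuous_intros)
    moreover have "continuous_on S\<eta> f" by (rule continuous_on_subset[OF fc]) (auto simp: S\<eta>_def)
    ultimately obtain vm where vm: "vm \<in> S\<eta>" "\<forall>y\<in>S\<eta>. f vm \<le> f y"
      using continuous_attains_inf[OF _ False] by blast
    have "f vm > 0" unfolding f_def
    proof (rule pos_K0[OF x0 per pos])
      show "x0 * exp (-(3/4)*ln b) \<le> vm" "vm \<le> x0 * exp ((3/4)*ln b)"
        using vm(1) unfolding S\<eta>_def Kl_def Kh_def \<beta>_def by auto
      show "vm \<noteq> x0" using vm(1) \<eta> unfolding S\<eta>_def by auto
    qed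
    then show ?thesis using that[of "f vm"] vm by auto
  qed
  define e' where "e' = min (\<epsilon>/(4*R)) (1/2)"
  have e': "0 < e'" "e' \<le> 1/2" "e' * (2*R) \<le> \<epsilon>/2"
  proof -
    show "0 < e'" "e' \<le> 1/2" unfolding e'_def using \<epsilon> R by auto
    have "e' \<le> \<epsilon>/(4*R)" unfolding e'_def by simp
    then have "e' * (2*R) \<le> \<epsilon>/(4*R) * (2*R)" using R by (intro mult_right_mono) auto
    also have "\<dots> = \<epsilon>/2" using R by simp
    finally show "e' * (2*R) \<le> \<epsilon>/2" .
  qed
  have "uniformly_continuous_on {Kl..Kh} f" by (rule compact_uniformly_continuous[OF fc compact_Icc])
  moreover have "0 < e' * m" using e' m by simp
  ultimately obtain d where d: "0 < d" "\<forall>v\<in>{Kl..Kh}. \<forall>v'\<in>{Kl..Kh}. dist v' v < d \<longrightarrow> dist (f v') (f v) < e' * m"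
    unfolding uniformly_continuous_on_def by metis
  define \<rho> where "\<rho> = min 1 (\<epsilon>/4)"
  have \<rho>: "0 < \<rho>" "\<rho> \<le> 1" "2*\<rho> \<le> \<epsilon>/2" unfolding \<rho>_def using \<epsilon> by auto
  have l\<delta>: "0 < -ln \<delta>" using \<delta> by simp
  define Dd where "Dd = e' * (-ln \<delta>)"
  have Dd: "0 < Dd" unfolding Dd_def using e' l\<delta> by (intro mult_pos_pos) auto
  define N where "N = max 1 (max (2*R) (2*R/Dd))"
  have N: "1 \<le> N" "2*R \<le> N" "2*(R/N) \<le> e'*(-ln \<delta>)"
  proof -
    show "1 \<le> N" "2*R \<le> N" unfolding N_def by auto
    have "2*R/Dd \<le> N" unfolding N_def by auto
    then have "2*R \<le> N * Dd" by (simp add: pos_divide_le_eq[OF Dd])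
    moreover have "0 < N" unfolding N_def by auto
    ultimately have "2*R/N \<le> Dd" by (simp add: pos_divide_le_eq mult.commute)
    then show "2*(R/N) \<le> e'*(-ln \<delta>)" unfolding Dd_def by simp
  qed
  define S where "S = N + R"
  have S: "1 \<le> S" "0 < S" unfolding S_def using N R by auto
  define gap where "gap = min (Cl - Kl) (Kh - Ch)"
  have gap: "0 < gap" unfolding gap_def using KC by auto
  define Kmin where "Kmin = max (max (max (ln (R/d)) (ln (2*R/\<eta>))) (max (ln (R/gap)) (ln (S/\<delta>))))
     (max 1 (max ((1+e')*ln S/e') (-(1-e')*ln \<rho>/e')))"
  have Kcond: "R / exp K < d \<and> R / exp K < \<eta>/2 \<and> R / exp K < gap \<and> S / exp K < \<delta> \<and> 1 \<le> K
      \<and> (1+e')*ln S \<le> e'*K \<and> -(1-e')*ln \<rho> \<le> e'*K" if K: "Kmin < K" for K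
  proof (intro conjI)
    show "R / exp K < d" using K R d by (intro expbound) (auto simp: Kmin_def)
    show "R / exp K < \<eta>/2"
    proof -
      have "ln (2*R/\<eta>) < K" using K unfolding Kmin_def by auto
      then have "2*R/\<eta> < exp K" using R \<eta> by (metis exp_less_cancel_iff exp_ln divide_pos_pos mult_pos_pos zero_less_numeral)
      then show ?thesis using R \<eta> by (simp add: field_simps)
    qed
    show "R / exp K < gap" using K R gap by (intro expbound) (auto simp: Kmin_def)
    show "S / exp K < \<delta>" using K S \<delta> by (intro expbound) (auto simp: Kmin_def)
    show "1 \<le> K" using K unfolding Kmin_def by auto
    have "(1+e')*ln S/e' \<le> K" using K unfolding Kmin_def by auto
    then show "(1+e')*ln S \<le> e'*K" using e' by (simp add: divide_le_eq mult.commute)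
    have "-(1-e')*ln \<rho>/e' \<le> K" using K unfolding Kmin_def by auto
    then show "-(1-e')*ln \<rho> \<le> e'*K" using e' by (simp add: divide_le_eq mult.commute)
  qed
  define X where "X = max (R + 1) (exp (Kmin + ln x0 + \<beta>))"
  show ?thesis
  proof (rule eventually_at_top_linorderI[of X])
    fix x assume xX: "X \<le> x"
    have x1: "R + 1 \<le> x" using xX unfolding X_def by auto
    have xpos: "0 < x" using x1 R by linarith
    have lnx: "Kmin + ln x0 + \<beta> \<le> ln x"
      using xX xpos unfolding X_def by (subst ln_ge_iff) auto
    define k where "k = \<lfloor>(ln x - ln x0)/\<beta> + 1/2\<rfloor>"
    define K where "K = real_of_int k * \<beta>"
    have k1: "(ln x - ln x0)/\<beta> + 1/2 - 1 < real_of_int k" "real_of_int k \<le> (ln x - ln x0)/\<beta> + 1/2"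
      unfolding k_def using real_of_int_floor_gt_diff_one[of "(ln x - ln x0)/\<beta> + 1/2"] by (linarith, simp)
    have "((ln x - ln x0)/\<beta> + 1/2 - 1) * \<beta> < K"
      unfolding K_def using k1(1) \<beta> by (intro mult_strict_right_mono) auto
    moreover have "((ln x - ln x0)/\<beta> + 1/2 - 1) * \<beta> = ln x - ln x0 - \<beta>/2" using \<beta> by (simp add: field_simps)
    ultimately have Klo: "ln x - ln x0 - \<beta>/2 < K" by simp
    have "K \<le> ((ln x - ln x0)/\<beta> + 1/2) * \<beta>"
      unfolding K_def using k1(2) \<beta> by (intro mult_right_mono) auto
    moreover have "((ln x - ln x0)/\<beta> + 1/2) * \<beta> = ln x - ln x0 + \<beta>/2" using \<beta> by (simp add: field_simps)
    ultimately have Khi: "K \<le> ln x - ln x0 + \<beta>/2" by simp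
    have KK: "Kmin < K" using Klo lnx \<beta> by linarith
    note KC2 = Kcond[OF KK]
    define E where "E = exp K"
    have Epos: "0 < E" unfolding E_def by simp
    define v0 where "v0 = x / E"
    have v0e: "v0 = exp (ln x - K)" unfolding v0_def E_def using xpos by (simp add: exp_diff)
    have v0C: "Cl \<le> v0" "v0 \<le> Ch"
    proof -
      have "Cl = exp (ln x0 + -(1/2)*\<beta>)" unfolding Cl_def exp_add using x0 by simp
      then show "Cl \<le> v0" unfolding v0e using Khi by simp
      have "Ch = exp (ln x0 + (1/2)*\<beta>)" unfolding Ch_def exp_add using x0 by simp
      then show "v0 \<le> Ch" unfolding v0e using Klo by simp
    qed
    have hp: "h (ln y) = f (y/E)" if "0 < y" for y
    proof -
      have "h ((ln y - K) + real_of_int k * ln b) = h (ln y - K)" by (rule per_int[OF per])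
      then show ?thesis unfolding f_def E_def using that by (simp add: ln_div K_def \<beta>_def)
    qed
    have win: "y/E \<in> {Kl..Kh} \<and> \<bar>y/E - v0\<bar> \<le> R/E" if "x - R \<le> y" "y \<le> x + R" for y
    proof -
      have "\<bar>y/E - v0\<bar> = \<bar>y - x\<bar>/E" unfolding v0_def using Epos by (simp add: field_simps)
      also have "\<dots> \<le> R/E" using that Epos by (intro divide_right_mono) auto
      finally have 1: "\<bar>y/E - v0\<bar> \<le> R/E" .
      have "R/E < gap" using KC2 unfolding E_def by simp
      then show ?thesis using 1 v0C unfolding gap_def by auto
    qed
    have contw: "continuous_on {u..v} (\<lambda>y. h (ln y))" if "x - R \<le> u" for u v
      using that x1 by (intro continuous_on_compose2[OF hc] continuous_intros) auto
    show "\<exists>w>0. \<forall>u v. x - R \<le> u \<longrightarrow> u \<le> v \<longrightarrow> v \<le> x + R \<longrightarrow>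
            \<bar>(LINT y:{u<..v}|lborel. h (ln y)) - (v-u)*w\<bar> \<le> \<epsilon>*w"
    proof (cases "\<bar>x - x0*E\<bar> \<le> N")
      case True
      define w where "w = 1/K"
      have Kpos: "0 < K" using KC2 by linarith
      have w: "0 < w" unfolding w_def using Kpos by simp
      show ?thesis
      proof (intro exI[of _ w] conjI allI impI w)
        fix u v assume uv: "x - R \<le> u" "u \<le> v" "v \<le> x + R"
        have bnd: "\<forall>y\<in>{u..v}. 0 \<le> h (ln y) \<and> h (ln y) \<le> (1+e')*w \<and> (\<rho> \<le> \<bar>y - x0*E\<bar> \<longrightarrow> (1-e')*w \<le> h (ln y))"
        proof
          fix y assume y: "y \<in> {u..v}"
          have ypos: "0 < y" using y uv x1 by auto
          define s where "s = y - x0*E"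
          have sS: "\<bar>s\<bar> \<le> S" unfolding s_def S_def using y uv True by auto
          show "0 \<le> h (ln y) \<and> h (ln y) \<le> (1+e')*w \<and> (\<rho> \<le> \<bar>y - x0*E\<bar> \<longrightarrow> (1-e')*w \<le> h (ln y))"
          proof (cases "s = 0")
            case True
            then have "y/E = x0" unfolding s_def using Epos by simp
            then have "h (ln y) = 0" using hp[OF ypos] h0 unfolding f_def by simp
            then show ?thesis using True w e' \<rho> unfolding s_def by simp
          next
            case False
            have yE: "y/E - x0 = s/E" unfolding s_def using Epos by (simp add: field_simps)
            have "\<bar>s\<bar>/E \<le> S/E" using sS Epos by (intro divide_right_mono) auto
            also have "\<dots> < \<delta>" using KC2 unfolding E_def by simp
            finally have sd: "\<bar>s/E\<bar> < \<delta>" using Epos by simp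
            have "0 < \<bar>y/E - x0\<bar> \<and> \<bar>y/E - x0\<bar> < \<delta>" using yE sd False Epos by simp
            then have "h (ln (y/E)) = - 1 / ln \<bar>y/E - x0\<bar>" using near by blast
            then have "h (ln y) = - 1 / ln \<bar>y/E - x0\<bar>"
              using hp[OF ypos] unfolding f_def by simp
            also have "\<dots> = -1/(ln \<bar>s\<bar> - K)"
              unfolding yE using Epos False by (simp add: ln_div E_def)
            finally have hv: "h (ln y) = -1/(ln \<bar>s\<bar> - K)" .
            have cb: "0 \<le> -1/(ln \<bar>s\<bar> - K) \<and> -1/(ln \<bar>s\<bar> - K) \<le> (1+e')*(1/K) \<and>
               (\<rho> \<le> \<bar>s\<bar> \<longrightarrow> (1-e')*(1/K) \<le> -1/(ln \<bar>s\<bar> - K))"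
              using case1_bounds[of K s S e' \<rho>] Kpos False sS S KC2 \<rho> e' by auto
            show ?thesis using cb hv unfolding w_def s_def by simp
          qed
        qed
        have "\<bar>(LINT y:{u<..v}|lborel. h (ln y)) - (v-u)*w\<bar> \<le> (e'*(v-u) + 2*\<rho>)*w"
          by (rule window_int[OF contw[OF uv(1)] uv(2)]) (use w e' \<rho> bnd in auto)
        also have "\<dots> \<le> \<epsilon>*w"
        proof -
          have "e'*(v-u) \<le> e'*(2*R)" using e' uv by (intro mult_left_mono) auto
          then have "e'*(v-u) + 2*\<rho> \<le> \<epsilon>" using e' \<rho> by linarith
          then show ?thesis using w by (intro mult_right_mono) auto
        qed
        finally show "\<bar>(LINT y:{u<..v}|lborel. h (ln y)) - (v-u)*w\<bar> \<le> \<epsilon>*w" .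
      qed
    next
      case False
      define w where "w = f v0"
      have rel: "0 < w \<and> (\<forall>y. x - R \<le> y \<longrightarrow> y \<le> x + R \<longrightarrow> \<bar>f (y/E) - w\<bar> \<le> e' * w)"
      proof (cases "\<eta> \<le> \<bar>v0 - x0\<bar>")
        case True
        have v0S: "v0 \<in> S\<eta>" unfolding S\<eta>_def using True v0C KC \<eta> by auto
        then have mw: "m \<le> w" using m unfolding w_def by auto
        have "\<bar>f (y/E) - w\<bar> \<le> e' * w" if "x - R \<le> y" "y \<le> x + R" for y
        proof -
          have "R/E < d" using KC2 unfolding E_def by simp
          then have "dist (y/E) v0 < d" using win[OF that] by (simp add: dist_real_def)
          moreover have "v0 \<in> {Kl..Kh}" using v0C KC by auto
          ultimately have "dist (f (y/E)) (f v0) < e' * m" using d win[OF that] by auto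
          also have "\<dots> \<le> e' * w" using mw e' by (intro mult_left_mono) auto
          finally show ?thesis unfolding w_def by (simp add: dist_real_def)
        qed
        then show ?thesis using mw m by auto
      next
        case False2: False
        define r where "r = \<bar>v0 - x0\<bar>"
        have "\<bar>v0 - x0\<bar> = \<bar>x - x0*E\<bar>/E" unfolding v0_def using Epos by (simp add: field_simps)
        then have rN: "N/E < r" unfolding r_def using False Epos by (simp add: divide_strict_right_mono)
        have "0 < N/E" using Epos N by simp
        then have rpos: "0 < r" using rN by linarith
        have r\<delta>: "r < \<delta>" unfolding r_def using False2 \<eta>_def \<delta> by auto
        have lr: "ln r < 0" using rpos r\<delta> \<delta> by simp
        have fv0: "f v0 = -1/ln r" using near rpos r\<delta> unfolding f_def r_def by auto
        have wpos: "0 < w" unfolding w_def fv0 using lr by simp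
        define q where "q = R/N"
        have q: "0 \<le> q" "q \<le> 1/2" "2*q \<le> e'*(-ln \<delta>)" unfolding q_def using N R by (auto simp: field_simps)
        have "\<bar>f (y/E) - w\<bar> \<le> e' * w" if "x - R \<le> y" "y \<le> x + R" for y
        proof -
          define r' where "r' = \<bar>y/E - x0\<bar>"
          have "\<bar>r' - r\<bar> \<le> \<bar>y/E - v0\<bar>" unfolding r'_def r_def by simp
          also have "\<dots> \<le> R/E" using win[OF that] by simp
          also have "\<dots> = q * (N/E)" unfolding q_def using N by (simp add: field_simps)
          also have "\<dots> \<le> q * r" using q rN by (intro mult_left_mono) auto
          finally have rr: "\<bar>r' - r\<bar> \<le> q * r" .
          have "q * r \<le> (1/2) * r" using q rpos by (intro mult_right_mono) auto
          then have r'b: "r/2 \<le> r'" "r' \<le> 3/2 * r" using rr by auto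
          have r'pos: "0 < r'" using r'b rpos by linarith
          have "r < \<delta>/2" using False2 unfolding r_def \<eta>_def by simp
          then have r'\<delta>: "r' < \<delta>" using r'b(2) \<delta>(1) by linarith
          have fy: "f (y/E) = -1/ln r'" using near r'pos r'\<delta> unfolding f_def r'_def by auto
          show ?thesis unfolding fy w_def fv0
            by (rule log_rel[OF rpos r'pos r\<delta> r'\<delta> \<delta>(2) rr q(2) q(3) q(1)])
        qed
        then show ?thesis using wpos by auto
      qed
      show ?thesis
      proof (intro exI[of _ w] conjI allI impI)
        show "0 < w" using rel by simp
        fix u v assume uv: "x - R \<le> u" "u \<le> v" "v \<le> x + R"
        have bnd: "\<forall>y\<in>{u..v}. 0 \<le> h (ln y) \<and> h (ln y) \<le> (1+e')*w \<and> (0 \<le> \<bar>y - x\<bar> \<longrightarrow> (1-e')*w \<le> h (ln y))"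
        proof
          fix y assume y: "y \<in> {u..v}"
          have ypos: "0 < y" using y uv x1 by auto
          have "\<bar>f (y/E) - w\<bar> \<le> e' * w" using rel y uv by auto
          then have "(1-e')*w \<le> h (ln y)" "h (ln y) \<le> (1+e')*w"
            using hp[OF ypos] by (auto simp: algebra_simps abs_le_iff)
          moreover have "0 \<le> (1-e')*w" using e' rel by simp
          ultimately show "0 \<le> h (ln y) \<and> h (ln y) \<le> (1+e')*w \<and> (0 \<le> \<bar>y - x\<bar> \<longrightarrow> (1-e')*w \<le> h (ln y))"
            by linarith
        qed
        have "\<bar>(LINT y:{u<..v}|lborel. h (ln y)) - (v-u)*w\<bar> \<le> (e'*(v-u) + 2*0)*w"
          by (rule window_int[OF contw[OF uv(1)] uv(2)]) (use rel e' bnd in auto)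
        also have "\<dots> \<le> \<epsilon>*w"
        proof -
          have "e'*(v-u) \<le> e'*(2*R)" using e' uv by (intro mult_left_mono) auto
          then have "e'*(v-u) + 2*0 \<le> \<epsilon>" using e' \<epsilon> by linarith
          then show ?thesis using rel by (intro mult_right_mono) auto
        qed
        finally show "\<bar>(LINT y:{u<..v}|lborel. h (ln y)) - (v-u)*w\<bar> \<le> \<epsilon>*w" .
      qed
    qed
  qed
qed



context
  fixes x0 b \<delta> \<alpha> :: real and h :: "real \<Rightarrow> real"
  assumes x0: "1 < x0" "x0 < b"
    and \<delta>: "0 < \<delta>" "\<delta> < 1" "\<delta> < min (x0 - 1) (b - x0)"
    and hc: "continuous_on UNIV h"
    and per: "\<forall>t. h (t + ln b) = h t"
    and pos: "\<forall>x\<in>{1..<x0} \<union> {x0<..b}. h (ln x) > 0"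
    and h0: "h (ln x0) = 0"
    and near: "\<forall>x. 0 < \<bar>x - x0\<bar> \<and> \<bar>x - x0\<bar> < \<delta> \<longrightarrow> h (ln x) = - 1 / ln \<bar>x - x0\<bar>"
    and \<alpha>: "\<alpha> > 0"
begin

lemma h_reduce: "\<exists>t'. 0 \<le> t' \<and> t' < ln b \<and> h t = h t'"
proof -
  have lb: "0 < ln b" using x0 by simp
  define k where "k = \<lfloor>t / ln b\<rfloor>"
  define t' where "t' = t - real_of_int k * ln b"
  have k1: "real_of_int k \<le> t / ln b" "t / ln b - 1 < real_of_int k" unfolding k_def by simp_all
  have "real_of_int k * ln b \<le> t / ln b * ln b" using k1 lb by (intro mult_right_mono) auto
  then have a: "0 \<le> t'" unfolding t'_def using lb by simp
  have "(t / ln b - 1) * ln b < real_of_int k * ln b" using k1 lb by (intro mult_strict_right_mono) auto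
  then have "t - ln b < real_of_int k * ln b" using lb by (simp add: algebra_simps)
  then have c: "t' < ln b" unfolding t'_def by simp
  have "h (t' + real_of_int k * ln b) = h t'" by (rule per_int[OF per])
  then have "h t = h t'" unfolding t'_def by simp
  then show ?thesis using a c by blast
qed

lemma h_nonneg: "0 \<le> h t"
proof -
  obtain t' where t': "0 \<le> t'" "t' < ln b" "h t = h t'" using h_reduce by blast
  define y where "y = exp t'"
  have y: "1 \<le> y" "y < b" "ln y = t'" unfolding y_def using t' x0
    by (auto simp: exp_less_cancel_iff) (metis exp_less_cancel_iff exp_ln less_trans zero_less_one x0(1) x0(2) t'(2))
  show ?thesis
  proof (cases "y = x0")
    case True then show ?thesis using t' y h0 by simp
  next
    case False
    then have "y \<in> {1..<x0} \<union> {x0<..b}" using y by auto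
    then have "h (ln y) > 0" using pos by blast
    then show ?thesis using t' y by simp
  qed
qed

lemma h_bounded: "\<exists>B. \<forall>t. \<bar>h t\<bar> \<le> B"
proof -
  have "continuous_on {0..ln b} h" by (rule continuous_on_subset[OF hc]) auto
  moreover have "{0..ln b} \<noteq> {}" using x0 by simp
  ultimately obtain tm where tm: "\<forall>t\<in>{0..ln b}. h t \<le> h tm"
    using continuous_attains_sup[OF compact_Icc] by blast
  have "\<bar>h t\<bar> \<le> h tm" for t
  proof -
    obtain t' where t': "0 \<le> t'" "t' < ln b" "h t = h t'" using h_reduce by blast
    then show ?thesis using tm h_nonneg by auto
  qed
  then show ?thesis by blast
qed

lemma hm[measurable]: "h \<in> borel_measurable borel"
  by (rule borel_measurable_continuous_onI[OF hc])

lemma int_G1: "set_integrable lborel {1..} (\<lambda>y. y powr (-1-\<alpha>) * h (ln y))"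
proof -
  obtain B where B: "\<forall>t. \<bar>h t\<bar> \<le> B" using h_bounded by blast
  have "(\<lambda>y. y powr (-1-\<alpha>)) integrable_on {1..}"
    using has_integral_powr_to_inf[of "-1-\<alpha>" 1] \<alpha> by (auto simp: integrable_on_def)
  then have "(\<lambda>y. y powr (-1-\<alpha>)) absolutely_integrable_on {1..}"
    by (rule nonnegative_absolutely_integrable_1) auto
  then have P: "set_integrable lborel {1..} (\<lambda>y. y powr (-1-\<alpha>))"
    unfolding set_integrable_def by (subst (asm) integrable_completion) auto
  have PB: "set_integrable lborel {1..} (\<lambda>y. B * y powr (-1-\<alpha>))"
    using P by (rule set_integrable_mult_right)
  show ?thesis
  proof (rule set_integrable_bound[OF PB])
    show "set_borel_measurable lborel {1..} (\<lambda>y. y powr (-1-\<alpha>) * h (ln y))"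
      unfolding set_borel_measurable_def by measurable
    have "norm (y powr (-1-\<alpha>) * h (ln y)) \<le> norm (B * y powr (-1-\<alpha>))" if "y \<in> {1..}" for y
    proof -
      have "norm (y powr (-1-\<alpha>) * h (ln y)) = y powr (-1-\<alpha>) * \<bar>h (ln y)\<bar>" by (simp add: abs_mult)
      also have "\<dots> \<le> y powr (-1-\<alpha>) * B" using B by (intro mult_left_mono) auto
      also have "\<dots> \<le> \<bar>B\<bar> * y powr (-1-\<alpha>)" by (simp add: mult.commute mult_right_mono)
      also have "\<dots> = norm (B * y powr (-1-\<alpha>))" by (simp add: abs_mult)
      finally show ?thesis .
    qed
    then show "AE y in lborel. y \<in> {1..} \<longrightarrow> norm (y powr (-1-\<alpha>) * h (ln y)) \<le> norm (B * y powr (-1-\<alpha>))"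
      by auto
  qed
qed

lemma phi_eq: "phi_fun h \<alpha> y = indicator {1..} y *\<^sub>R (y powr (-1-\<alpha>) * h (ln y))"
proof -
  have e: "-\<alpha>-1 = -1-\<alpha>" by simp
  show ?thesis unfolding phi_fun_def e by simp
qed

lemma phi_int: "integrable lborel (phi_fun h \<alpha>)"
  using int_G1 unfolding set_integrable_def phi_eq[abs_def] .

lemma phi_nonneg: "0 \<le> phi_fun h \<alpha> y"
  unfolding phi_fun_def using h_nonneg by (auto simp: indicator_def)

lemma M_eq: "M_const h \<alpha> = integral\<^sup>L lborel (phi_fun h \<alpha>)"
  unfolding M_const_def set_lebesgue_integral_def phi_eq[abs_def] ..

lemma M_nonneg: "0 \<le> M_const h \<alpha>"
  unfolding M_eq using phi_nonneg by (intro integral_nonneg_AE) auto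

lemma phi_meas[measurable]: "phi_fun h \<alpha> \<in> borel_measurable borel"
  unfolding phi_fun_def by measurable

lemma mu_measure:
  assumes A: "A \<in> sets borel" and M: "M_const h \<alpha> \<noteq> 0"
  shows "measure (mu_meas h \<alpha>) A = (\<integral>y. indicator A y * phi_fun h \<alpha> y \<partial>lborel) / M_const h \<alpha>"
proof -
  let ?M = "M_const h \<alpha>"
  have Mp: "0 < ?M" using M M_nonneg by simp
  have "emeasure (mu_meas h \<alpha>) A = (\<integral>\<^sup>+ y. ennreal (phi_fun h \<alpha> y / ?M) * indicator A y \<partial>lborel)"
    unfolding mu_meas_def using A by (subst emeasure_density) auto
  also have "\<dots> = (\<integral>\<^sup>+ y. ennreal (indicator A y * phi_fun h \<alpha> y / ?M) \<partial>lborel)"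
    by (intro nn_integral_cong) (auto simp: indicator_def)
  also have "\<dots> = ennreal (\<integral>y. indicator A y * phi_fun h \<alpha> y / ?M \<partial>lborel)"
  proof (rule nn_integral_eq_integral)
    show "integrable lborel (\<lambda>y. indicator A y * phi_fun h \<alpha> y / ?M)"
      using integrable_mult_indicator[of A lborel "phi_fun h \<alpha>"] A phi_int
      by (intro integrable_divide) auto
    show "AE y in lborel. 0 \<le> indicator A y * phi_fun h \<alpha> y / ?M"
      using phi_nonneg Mp by (auto simp: indicator_def)
  qed
  finally have "emeasure (mu_meas h \<alpha>) A = ennreal ((\<integral>y. indicator A y * phi_fun h \<alpha> y \<partial>lborel) / ?M)"
    by simp
  moreover have "0 \<le> (\<integral>y. indicator A y * phi_fun h \<alpha> y \<partial>lborel) / ?M"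
    using phi_nonneg Mp by (intro divide_nonneg_pos integral_nonneg_AE) (auto simp: indicator_def)
  ultimately show ?thesis by (simp add: measure_def)
qed

end


lemma ratio_bound:
  fixes plo phi w \<epsilon> c I1 I2 W1 W2 :: real
  assumes p: "0 < plo" "plo \<le> phi" and w: "0 < w" and e: "0 < \<epsilon>" "\<epsilon> < c"
    and W: "plo*I1 \<le> W1" "W1 \<le> phi*I1" "plo*I2 \<le> W2" "W2 \<le> phi*I2"
    and I: "\<bar>I1 - c*w\<bar> \<le> \<epsilon>*w" "\<bar>I2 - c*w\<bar> \<le> \<epsilon>*w"
  shows "\<bar>W1/W2 - 1\<bar> \<le> (phi/plo)*((c+\<epsilon>)/(c-\<epsilon>)) - 1" "0 < W2"
proof -
  have I1: "(c-\<epsilon>)*w \<le> I1" "I1 \<le> (c+\<epsilon>)*w" using I(1) by (auto simp: algebra_simps abs_le_iff)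
  have I2: "(c-\<epsilon>)*w \<le> I2" "I2 \<le> (c+\<epsilon>)*w" using I(2) by (auto simp: algebra_simps abs_le_iff)
  have cw: "0 < (c-\<epsilon>)*w" using e w by simp
  define L where "L = plo*((c-\<epsilon>)*w)"
  define U where "U = phi*((c+\<epsilon>)*w)"
  have L: "0 < L" unfolding L_def using p cw by simp
  have phip: "0 < phi" using p by linarith
  have "L \<le> plo*I1" unfolding L_def using I1 p by (intro mult_left_mono) auto
  then have W1L: "L \<le> W1" using W by linarith
  have "L \<le> plo*I2" unfolding L_def using I2 p by (intro mult_left_mono) auto
  then have W2L: "L \<le> W2" using W by linarith
  have "phi*I1 \<le> U" unfolding U_def using I1 phip by (intro mult_left_mono) auto
  then have W1U: "W1 \<le> U" using W by linarith
  have "phi*I2 \<le> U" unfolding U_def using I2 phip by (intro mult_left_mono) auto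
  then have W2U: "W2 \<le> U" using W by linarith
  show W2p: "0 < W2" using L W2L by linarith
  have U: "0 < U" using L W1L W1U by linarith
  define \<theta> where "\<theta> = U/L"
  have \<theta>eq: "\<theta> = (phi/plo)*((c+\<epsilon>)/(c-\<epsilon>))" unfolding \<theta>_def U_def L_def using p w e
    by (simp add: field_simps)
  have up: "W1/W2 \<le> \<theta>" unfolding \<theta>_def using W1U W2L L W2p
    by (meson divide_mono less_le_not_le order.trans W1L)
  have lo: "L/U \<le> W1/W2" using W1L W2U L U W2p
    by (meson divide_mono less_le_not_le order.trans W1L)
  have \<theta>p: "0 < \<theta>" unfolding \<theta>_def using L U by simp
  have inv: "L/U = 1/\<theta>" unfolding \<theta>_def by simp
  have "1 - 1/\<theta> \<le> \<theta> - 1"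
  proof -
    have "0 \<le> (\<theta> - 1)^2" by simp
    then have "2*\<theta> \<le> \<theta>*\<theta> + 1" by (simp add: power2_eq_square algebra_simps)
    then have "(2*\<theta>)/\<theta> \<le> (\<theta>*\<theta> + 1)/\<theta>" using \<theta>p by (intro divide_right_mono) auto
    then have "2 \<le> \<theta> + 1/\<theta>" using \<theta>p by (simp add: add_divide_distrib)
    then show ?thesis by linarith
  qed
  then show "\<bar>W1/W2 - 1\<bar> \<le> (phi/plo)*((c+\<epsilon>)/(c-\<epsilon>)) - 1"
    using up lo inv \<theta>eq by (auto simp: abs_le_iff)
qed

lemma pratio_lim:
  fixes R a :: real
  assumes "0 < R"
  shows "((\<lambda>x. (x - R) powr a / (x + R) powr a) \<longlongrightarrow> 1) at_top"
proof -
  have r: "((\<lambda>x::real. R / x) \<longlongrightarrow> 0) at_top"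
    by (intro tendsto_divide_0[OF tendsto_const] filterlim_at_top_imp_at_infinity filterlim_ident)
  have "((\<lambda>x. (1 - R/x)/(1 + R/x)) \<longlongrightarrow> (1 - 0)/(1 + 0)) at_top"
    by (intro tendsto_intros r) auto
  then have q: "((\<lambda>x. (1 - R/x)/(1 + R/x)) \<longlongrightarrow> 1) at_top" by simp
  have "((\<lambda>x. ((1 - R/x)/(1 + R/x)) powr a) \<longlongrightarrow> 1 powr a) at_top"
    by (rule tendsto_powr[OF q tendsto_const]) simp
  then have l: "((\<lambda>x. ((1 - R/x)/(1 + R/x)) powr a) \<longlongrightarrow> 1) at_top" by simp
  have ev: "\<forall>\<^sub>F x in at_top. ((1 - R/x)/(1 + R/x)) powr a = (x - R) powr a / (x + R) powr a"
  proof (rule eventually_at_top_linorderI[of "R + 1"])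
    fix x assume x: "R + 1 \<le> x"
    then have xp: "0 < x" using assms by linarith
    have xR: "0 < x + R" "x + R \<noteq> 0" "R + x \<noteq> 0" using xp assms by auto
    have e1: "1 - R/x = (x-R)/x" "1 + R/x = (x+R)/x" using xp by (simp_all add: field_simps)
    have "(1 - R/x)/(1 + R/x) = (x - R)/(x + R)" unfolding e1 using xp by (simp add: divide_divide_eq_right)
    then show "((1 - R/x)/(1 + R/x)) powr a = (x - R) powr a / (x + R) powr a"
      using x assms by (simp add: powr_divide)
  qed
  show ?thesis by (rule Lim_transform_eventually[OF l ev])
qed



context
  fixes x0 b \<delta> \<alpha> :: real and h :: "real \<Rightarrow> real"
  assumes x0: "1 < x0" "x0 < b"
    and \<delta>: "0 < \<delta>" "\<delta> < 1" "\<delta> < min (x0 - 1) (b - x0)"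
    and hc: "continuous_on UNIV h"
    and per: "\<forall>t. h (t + ln b) = h t"
    and pos: "\<forall>x\<in>{1..<x0} \<union> {x0<..b}. h (ln x) > 0"
    and h0: "h (ln x0) = 0"
    and near: "\<forall>x. 0 < \<bar>x - x0\<bar> \<and> \<bar>x - x0\<bar> < \<delta> \<longrightarrow> h (ln x) = - 1 / ln \<bar>x - x0\<bar>"
    and \<alpha>: "\<alpha> > 0"
begin

lemmas hfacts = x0 \<delta> hc per pos h0 near \<alpha>

lemma hnn: "0 \<le> h t" by (rule h_nonneg[OF hfacts])

lemma Wbounds:
  assumes xr: "1 \<le> x - R" "x - R \<le> u" "u \<le> v" "v \<le> x + R"
  shows "(x+R) powr (-\<alpha>-1) * (LINT y:{u<..v}|lborel. h (ln y)) \<le> (LINT y:{u<..v}|lborel. y powr (-\<alpha>-1) * h (ln y))"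
    and "(LINT y:{u<..v}|lborel. y powr (-\<alpha>-1) * h (ln y)) \<le> (x-R) powr (-\<alpha>-1) * (LINT y:{u<..v}|lborel. h (ln y))"
proof -
  have c1: "continuous_on {u..v} (\<lambda>y. h (ln y))"
    using xr by (intro continuous_on_compose2[OF hc] continuous_intros) auto
  have c2: "continuous_on {u..v} (\<lambda>y. y powr (-\<alpha>-1) * h (ln y))"
    using xr by (intro continuous_intros continuous_on_compose2[OF hc]) auto
  have i1: "set_integrable lborel {u<..v} (\<lambda>y. h (ln y))"
    by (rule set_integrable_subset[OF borel_integrable_atLeastAtMost'[OF c1]]) auto
  have i2: "set_integrable lborel {u<..v} (\<lambda>y. y powr (-\<alpha>-1) * h (ln y))"
    by (rule set_integrable_subset[OF borel_integrable_atLeastAtMost'[OF c2]]) auto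
  have i3: "set_integrable lborel {u<..v} (\<lambda>y. p * h (ln y))" for p :: real
    using i1 by (rule set_integrable_mult_right)
  have "(LINT y:{u<..v}|lborel. (x+R) powr (-\<alpha>-1) * h (ln y)) \<le> (LINT y:{u<..v}|lborel. y powr (-\<alpha>-1) * h (ln y))"
  proof (rule set_integral_mono[OF i3 i2])
    fix y assume y: "y \<in> {u<..v}"
    have "y powr (-\<alpha>-1) \<ge> (x+R) powr (-\<alpha>-1)" using y xr \<alpha> by (intro powr_mono2') auto
    then show "(x+R) powr (-\<alpha>-1) * h (ln y) \<le> y powr (-\<alpha>-1) * h (ln y)"
      using hnn by (intro mult_right_mono) auto
  qed
  then show "(x+R) powr (-\<alpha>-1) * (LINT y:{u<..v}|lborel. h (ln y)) \<le> (LINT y:{u<..v}|lborel. y powr (-\<alpha>-1) * h (ln y))"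
    by simp
  have "(LINT y:{u<..v}|lborel. y powr (-\<alpha>-1) * h (ln y)) \<le> (LINT y:{u<..v}|lborel. (x-R) powr (-\<alpha>-1) * h (ln y))"
  proof (rule set_integral_mono[OF i2 i3])
    fix y assume y: "y \<in> {u<..v}"
    have "y powr (-\<alpha>-1) \<le> (x-R) powr (-\<alpha>-1)" using y xr \<alpha> by (intro powr_mono2') auto
    then show "y powr (-\<alpha>-1) * h (ln y) \<le> (x-R) powr (-\<alpha>-1) * h (ln y)"
      using hnn by (intro mult_right_mono) auto
  qed
  then show "(LINT y:{u<..v}|lborel. y powr (-\<alpha>-1) * h (ln y)) \<le> (x-R) powr (-\<alpha>-1) * (LINT y:{u<..v}|lborel. h (ln y))"
    by simp
qed

lemma mu_window:
  assumes "1 \<le> x" "M_const h \<alpha> \<noteq> 0"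
  shows "measure (mu_meas h \<alpha>) {x<..x+c} = (LINT y:{x<..x+c}|lborel. y powr (-\<alpha>-1) * h (ln y)) / M_const h \<alpha>"
proof -
  have "measure (mu_meas h \<alpha>) {x<..x+c} = (\<integral>y. indicator {x<..x+c} y * phi_fun h \<alpha> y \<partial>lborel) / M_const h \<alpha>"
    by (rule mu_measure[OF hfacts]) (use assms in auto)
  also have "(\<integral>y. indicator {x<..x+c} y * phi_fun h \<alpha> y \<partial>lborel) = (LINT y:{x<..x+c}|lborel. y powr (-\<alpha>-1) * h (ln y))"
    unfolding set_lebesgue_integral_def
    by (intro Bochner_Integration.integral_cong) (use assms in \<open>auto simp: phi_fun_def indicator_def\<close>)
  finally show ?thesis .
qed

lemma window_pos:
  assumes "0 < c"
  shows "\<forall>\<^sub>F x in at_top. 0 < (LINT y:{x<..x+c}|lborel. y powr (-\<alpha>-1) * h (ln y))"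
proof -
  have R: "0 < c + 1" using assms by simp
  have e: "0 < c/2" using assms by simp
  have ev: "\<forall>\<^sub>F x in at_top. \<exists>w>0. \<forall>u v. x - (c+1) \<le> u \<longrightarrow> u \<le> v \<longrightarrow> v \<le> x + (c+1) \<longrightarrow>
            \<bar>(LINT y:{u<..v}|lborel. h (ln y)) - (v-u)*w\<bar> \<le> (c/2)*w"
    by (rule keyP[OF x0 \<delta> hc per pos h0 near R e])
  show ?thesis
    using ev eventually_ge_at_top[of "c + 2"]
  proof eventually_elim
    case (elim x)
    then obtain w where w: "0 < w" and all: "\<forall>u v. x - (c+1) \<le> u \<longrightarrow> u \<le> v \<longrightarrow> v \<le> x + (c+1) \<longrightarrow>
            \<bar>(LINT y:{u<..v}|lborel. h (ln y)) - (v-u)*w\<bar> \<le> (c/2)*w" by blast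
    have "\<bar>(LINT y:{x<..x+c}|lborel. h (ln y)) - ((x+c)-x)*w\<bar> \<le> (c/2)*w"
      by (rule all[rule_format]) (use assms in auto)
    then have b: "\<bar>(LINT y:{x<..x+c}|lborel. h (ln y)) - c*w\<bar> \<le> (c/2)*w" by simp
    have "0 < (c/2)*w" using assms w by simp
    moreover have "c*w - (c/2)*w \<le> (LINT y:{x<..x+c}|lborel. h (ln y))" using abs_le_D2[OF b] by linarith
    ultimately have I: "0 < (LINT y:{x<..x+c}|lborel. h (ln y))" by linarith
    have "(x+(c+1)) powr (-\<alpha>-1) * (LINT y:{x<..x+c}|lborel. h (ln y)) \<le> (LINT y:{x<..x+c}|lborel. y powr (-\<alpha>-1) * h (ln y))"
      by (rule Wbounds(1)) (use elim assms in auto)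
    moreover have "0 < (x+(c+1)) powr (-\<alpha>-1) * (LINT y:{x<..x+c}|lborel. h (ln y))"
      using I elim assms by simp
    ultimately show ?case by linarith
  qed
qed

lemma M_ne: "M_const h \<alpha> \<noteq> 0"
proof
  assume M0: "M_const h \<alpha> = 0"
  have "integral\<^sup>L lborel (phi_fun h \<alpha>) = 0" using M0 M_eq[OF hfacts] by simp
  then have AE: "AE y in lborel. phi_fun h \<alpha> y = 0"
    using integral_nonneg_eq_0_iff_AE[OF phi_int[OF hfacts]] phi_nonneg[OF hfacts] by auto
  obtain x where x: "x \<ge> 1" "0 < (LINT y:{x<..x+1}|lborel. y powr (-\<alpha>-1) * h (ln y))"
    using eventually_conj[OF window_pos[of 1] eventually_ge_at_top[of 1]] eventually_happens'[of at_top]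
    by (metis (mono_tags, lifting) eventually_at_top_linorder linorder_linear zero_less_one)
  have "(LINT y:{x<..x+1}|lborel. y powr (-\<alpha>-1) * h (ln y)) = (\<integral>y. indicator {x<..x+1} y * phi_fun h \<alpha> y \<partial>lborel)"
    unfolding set_lebesgue_integral_def
    by (intro Bochner_Integration.integral_cong) (use x in \<open>auto simp: phi_fun_def indicator_def\<close>)
  also have "\<dots> = 0"
    by (rule integral_eq_zero_AE) (use AE in auto)
  finally show False using x by simp
qed

end


lemma qbound:
  fixes c t :: real
  assumes "0 < c" "0 < t" "t \<le> 1"
  shows "(c + c*t/8)/(c - c*t/8) < 1 + t/3"
proof -
  have tt: "t*t \<le> t" using assms mult_left_mono[of t 1 t] by simp
  have eq: "(c + c*t/8)/(c - c*t/8) = (8+t)/(8-t)" using assms by (simp add: field_simps)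
  have "(1+t/3)*(8-t) = 8 + 5*t/3 - t*t/3" by (simp add: algebra_simps)
  then have "8 + t < (1+t/3)*(8-t)" using tt assms by linarith
  then have "(8+t)/(8-t) < 1 + t/3" using assms by (simp add: pos_divide_less_eq)
  then show ?thesis using eq by simp
qed

lemma thbound:
  fixes p q t :: real
  assumes "0 < p" "0 < q" "p < 1 + t/3" "q < 1 + t/3" "0 < t" "t \<le> 1"
  shows "p*q - 1 < t"
proof -
  have tt: "t*t \<le> t" using assms mult_left_mono[of t 1 t] by simp
  have "p*q < (1+t/3)*(1+t/3)" using assms by (intro mult_strict_mono) auto
  also have "\<dots> = 1 + 2*t/3 + t*t/9" by (simp add: algebra_simps)
  finally show ?thesis using tt assms by linarith
qed

context
  fixes x0 b \<delta> \<alpha> :: real and h :: "real \<Rightarrow> real"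
  assumes x0: "1 < x0" "x0 < b"
    and \<delta>: "0 < \<delta>" "\<delta> < 1" "\<delta> < min (x0 - 1) (b - x0)"
    and hc: "continuous_on UNIV h"
    and per: "\<forall>t. h (t + ln b) = h t"
    and pos: "\<forall>x\<in>{1..<x0} \<union> {x0<..b}. h (ln x) > 0"
    and h0: "h (ln x0) = 0"
    and near: "\<forall>x. 0 < \<bar>x - x0\<bar> \<and> \<bar>x - x0\<bar> < \<delta> \<longrightarrow> h (ln x) = - 1 / ln \<bar>x - x0\<bar>"
    and \<alpha>: "\<alpha> > 0"
begin

lemmas hfacts2 = x0 \<delta> hc per pos h0 near \<alpha>

lemma mainL: "L_loc (mu_meas h \<alpha>)"
  unfolding L_loc_def
proof (intro conjI allI impI)
  let ?M = "M_const h \<alpha>"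
  have M: "?M \<noteq> 0" by (rule M_ne[OF hfacts2])
  have Mp: "0 < ?M" using M M_nonneg[OF hfacts2] by simp
  have pm[measurable]: "phi_fun h \<alpha> \<in> borel_measurable borel" by (rule phi_meas[OF hfacts2])
  have fm: "(\<lambda>y. ennreal (phi_fun h \<alpha> y / ?M)) \<in> borel_measurable borel" by measurable
  show "prob_space (mu_meas h \<alpha>)"
  proof (rule prob_spaceI)
    have "emeasure (mu_meas h \<alpha>) (space (mu_meas h \<alpha>)) = (\<integral>\<^sup>+ y. ennreal (phi_fun h \<alpha> y / ?M) * indicator UNIV y \<partial>lborel)"
      unfolding mu_meas_def by (subst emeasure_density) (use fm in auto)
    also have "\<dots> = (\<integral>\<^sup>+ y. ennreal (phi_fun h \<alpha> y / ?M) \<partial>lborel)" by simp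
    also have "\<dots> = ennreal (\<integral>y. phi_fun h \<alpha> y / ?M \<partial>lborel)"
    proof (rule nn_integral_eq_integral)
      show "integrable lborel (\<lambda>y. phi_fun h \<alpha> y / ?M)"
        using phi_int[OF hfacts2] by (rule integrable_divide)
      show "AE y in lborel. 0 \<le> phi_fun h \<alpha> y / ?M"
        using phi_nonneg[OF hfacts2] Mp by auto
    qed
    also have "(\<integral>y. phi_fun h \<alpha> y / ?M \<partial>lborel) = 1"
      using M M_eq[OF hfacts2] by simp
    finally show "emeasure (mu_meas h \<alpha>) (space (mu_meas h \<alpha>)) = 1" by simp
  qed
  show "sets (mu_meas h \<alpha>) = sets borel" by (simp add: mu_meas_def)
  fix c :: real assume c: "0 < c"
  show "\<forall>\<^sub>F x in at_top. 0 < measure (mu_meas h \<alpha>) {x<..x+c}"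
    using window_pos[OF hfacts2 c] eventually_ge_at_top[of 1]
  proof eventually_elim
    case (elim x)
    then show ?case using mu_window[OF hfacts2 elim(2) M, of c] Mp by simp
  qed
  fix a :: real
  define R where "R = \<bar>a\<bar> + c + 1"
  have R: "0 < R" unfolding R_def using c by simp
  show "((\<lambda>x. measure (mu_meas h \<alpha>) {x+a<..x+a+c} / measure (mu_meas h \<alpha>) {x<..x+c}) \<longlongrightarrow> 1) at_top"
  proof (rule tendsto_iff[THEN iffD2], intro allI impI)
    fix e :: real assume e: "0 < e"
    define t where "t = min e 1"
    have t: "0 < t" "t \<le> 1" "t \<le> e" unfolding t_def using e by auto
    define \<epsilon> where "\<epsilon> = c*t/8"
    have \<epsilon>: "0 < \<epsilon>" "\<epsilon> < c" unfolding \<epsilon>_def using c t by auto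
    have q: "(c+\<epsilon>)/(c-\<epsilon>) < 1 + t/3" unfolding \<epsilon>_def using qbound[OF c t(1) t(2)] by simp
    have qp: "0 < (c+\<epsilon>)/(c-\<epsilon>)" using \<epsilon> by simp
    have ev1: "\<forall>\<^sub>F x in at_top. \<exists>w>0. \<forall>u v. x - R \<le> u \<longrightarrow> u \<le> v \<longrightarrow> v \<le> x + R \<longrightarrow>
            \<bar>(LINT y:{u<..v}|lborel. h (ln y)) - (v-u)*w\<bar> \<le> \<epsilon>*w"
      by (rule keyP[OF x0 \<delta> hc per pos h0 near R \<epsilon>(1)])
    have ev3: "\<forall>\<^sub>F x in at_top. (x - R) powr (-\<alpha>-1) / (x + R) powr (-\<alpha>-1) < 1 + t/3"
      by (rule order_tendstoD(2)[OF pratio_lim[OF R]]) (use t in simp)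
    show "\<forall>\<^sub>F x in at_top. dist (measure (mu_meas h \<alpha>) {x+a<..x+a+c} / measure (mu_meas h \<alpha>) {x<..x+c}) 1 < e"
      using ev1 eventually_ge_at_top[of "R + 1"] ev3
    proof eventually_elim
      case (elim x)
      then obtain w where w: "0 < w" and all: "\<forall>u v. x - R \<le> u \<longrightarrow> u \<le> v \<longrightarrow> v \<le> x + R \<longrightarrow>
            \<bar>(LINT y:{u<..v}|lborel. h (ln y)) - (v-u)*w\<bar> \<le> \<epsilon>*w" by blast
      have xR: "1 \<le> x - R" using elim by simp
      have a1: "x - R \<le> x + a" "x + a + c \<le> x + R" "x - R \<le> x" "x + c \<le> x + R"
        using c abs_ge_self[of a] abs_ge_minus_self[of a] unfolding R_def by linarith+
      have b1: "\<bar>(LINT y:{x+a<..x+a+c}|lborel. h (ln y)) - ((x+a+c)-(x+a))*w\<bar> \<le> \<epsilon>*w"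
        by (rule all[rule_format]) (use a1 c in auto)
      have b2: "\<bar>(LINT y:{x<..x+c}|lborel. h (ln y)) - ((x+c)-x)*w\<bar> \<le> \<epsilon>*w"
        by (rule all[rule_format]) (use a1 c in auto)
      define plo where "plo = (x+R) powr (-\<alpha>-1)"
      define phi where "phi = (x-R) powr (-\<alpha>-1)"
      have plo: "0 < plo" unfolding plo_def using xR R by simp
      have pp: "plo \<le> phi" unfolding plo_def phi_def using xR R \<alpha> by (intro powr_mono2') auto
      note W1 = Wbounds[OF hfacts2 xR a1(1) _ a1(2)]
      note W2 = Wbounds[OF hfacts2 xR a1(3) _ a1(4)]
      have W1a: "plo * (LINT y:{x+a<..x+a+c}|lborel. h (ln y)) \<le> (LINT y:{x+a<..x+a+c}|lborel. y powr (-\<alpha>-1) * h (ln y))"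
        unfolding plo_def by (rule W1(1)) (use c in simp)
      have W1b: "(LINT y:{x+a<..x+a+c}|lborel. y powr (-\<alpha>-1) * h (ln y)) \<le> phi * (LINT y:{x+a<..x+a+c}|lborel. h (ln y))"
        unfolding phi_def by (rule W1(2)) (use c in simp)
      have W2a: "plo * (LINT y:{x<..x+c}|lborel. h (ln y)) \<le> (LINT y:{x<..x+c}|lborel. y powr (-\<alpha>-1) * h (ln y))"
        unfolding plo_def by (rule W2(1)) (use c in simp)
      have W2b: "(LINT y:{x<..x+c}|lborel. y powr (-\<alpha>-1) * h (ln y)) \<le> phi * (LINT y:{x<..x+c}|lborel. h (ln y))"
        unfolding phi_def by (rule W2(2)) (use c in simp)
      have b1': "\<bar>(LINT y:{x+a<..x+a+c}|lborel. h (ln y)) - c*w\<bar> \<le> \<epsilon>*w" using b1 by simp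
      have b2': "\<bar>(LINT y:{x<..x+c}|lborel. h (ln y)) - c*w\<bar> \<le> \<epsilon>*w" using b2 by simp
      note rb = ratio_bound[OF plo pp w \<epsilon> W1a W1b W2a W2b b1' b2']
      have m1: "measure (mu_meas h \<alpha>) {x+a<..x+a+c} = (LINT y:{x+a<..x+a+c}|lborel. y powr (-\<alpha>-1) * h (ln y)) / ?M"
        by (rule mu_window[OF hfacts2 _ M]) (use xR a1 in auto)
      have m2: "measure (mu_meas h \<alpha>) {x<..x+c} = (LINT y:{x<..x+c}|lborel. y powr (-\<alpha>-1) * h (ln y)) / ?M"
        by (rule mu_window[OF hfacts2 _ M]) (use xR R in linarith)
      have ratio: "measure (mu_meas h \<alpha>) {x+a<..x+a+c} / measure (mu_meas h \<alpha>) {x<..x+c}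
          = (LINT y:{x+a<..x+a+c}|lborel. y powr (-\<alpha>-1) * h (ln y)) / (LINT y:{x<..x+c}|lborel. y powr (-\<alpha>-1) * h (ln y))"
        unfolding m1 m2 using M by simp
      have "(phi/plo)*((c+\<epsilon>)/(c-\<epsilon>)) - 1 < t"
      proof -
        have pq0: "0 < phi/plo" using plo pp by simp
        have "phi/plo < 1 + t/3" using elim(3) unfolding plo_def phi_def .
        then show ?thesis by (rule thbound[OF pq0 qp _ q t(1) t(2)])
      qed
      then show ?case unfolding dist_real_def ratio using rb(1) t by linarith
    qed
  qed
qed

end

theorem lemma3p1:
  fixes x0 b \<delta> \<alpha> :: real and h :: "real \<Rightarrow> real"
  assumes "1 < x0" "x0 < b"
    and "0 < \<delta>" "\<delta> < 1" "\<delta> < min (x0 - 1) (b - x0)"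
    and "continuous_on UNIV h"
    and "\<forall>t. h (t + ln b) = h t"
    and "\<forall>x\<in>{1..<x0} \<union> {x0<..b}. h (ln x) > 0"
    and "h (ln x0) = 0"
    and "\<forall>x. 0 < \<bar>x - x0\<bar> \<and> \<bar>x - x0\<bar> < \<delta> \<longrightarrow> h (ln x) = - 1 / ln \<bar>x - x0\<bar>"
    and "\<alpha> > 0"
  shows "L_loc (mu_meas h \<alpha>)"
  by (rule mainL[OF assms])

end
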